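(* If $x$ is regular for the sequence $n_j$ then \[ \lim_{j\to\infty}\frac{D_{n_j}(x)}{n_j}=L\in\overline{\mathbb{R}} \] if and only if \[ \lim_{j\to\infty}(-1)^{\iota_{n_j}(x)}=\operatorname{sign}(L),\qquad |L|\ge\frac\pi2,\qquad\lim_{j\to\infty}\rho_{n_j}(x)^2=A^{-1}(|L|). \]
   Context: Nodes: $x_{k,n}:=2k/n-1$, $k=0,\dots,n$; $D_n(x)=\sum_{k=0}^n(-1)^k\frac{1}{x-x_{k,n}}$. $\iota_n(x):=\lfloor n(x+1)/2\rfloor$, $\rho_n(x):=n(x-x_{\iota_n(x),n})-1$. $\overline{\mathbb{R}}=\mathbb{R}\cup\{\pm\infty\}$ is the two-point compactification of $\mathbb{R}$. $A(y)=\sum_{k=0}^\infty(-1)^k\frac{4k+2}{(2k+1)^2-y}$ for $y\in[0,1)$, extended by $A(1)=+\infty$; this is an increasing homeomorphism $[0,1]\to[\pi/2,+\infty]$, and $A^{-1}$ denotes its inverse. A sequence $n_j$ is a strictly increasing map $\mathbb{N}\to\mathbb{N}$; $x\in[-1,1]$ is regular for $n_j$ if there is $j_0$ with $x\notin\{x_{0,n_j},\dots,x_{n_j,n_j}\}$ for all $j\ge j_0$. *)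

theory Defs
  imports "HOL-Analysis.Analysis"
begin

definition node :: "nat \<Rightarrow> nat \<Rightarrow> real" where
  "node k n = 2 * real k / real n - 1"

definition Dn :: "nat \<Rightarrow> real \<Rightarrow> real" where
  "Dn n x = (\<Sum>k = 0..n. (-1) ^ k / (x - node k n))"

text \<open>iota_n(x) = floor(n(x+1)/2) (nonnegative for x in [-1,1]).\<close>
definition iota :: "nat \<Rightarrow> real \<Rightarrow> nat" where
  "iota n x = nat \<lfloor>real n * (x + 1) / 2\<rfloor>"

definition rho :: "nat \<Rightarrow> real \<Rightarrow> real" where
  "rho n x = real n * (x - node (iota n x) n) - 1"

definition A_fun :: "real \<Rightarrow> ereal" where
  "A_fun y = (if y < 1
      then ereal (\<Sum>k. (-1) ^ k * (4 * real k + 2) / ((2 * real k + 1)\<^sup>2 - y))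
      else \<infinity>)"

definition A_inv :: "ereal \<Rightarrow> real" where
  "A_inv = the_inv_into {0..1} A_fun"

definition esign :: "ereal \<Rightarrow> real" where
  "esign L = (if L > 0 then 1 else if L < 0 then -1 else 0)"

definition regular_for :: "(nat \<Rightarrow> nat) \<Rightarrow> real \<Rightarrow> bool" where
  "regular_for nj x \<longleftrightarrow> (\<exists>j0. \<forall>j\<ge>j0. \<forall>k\<le>nj j. x \<noteq> node k (nj j))"

end

theory Submission
  imports Defs
begin

definition cA :: "nat \<Rightarrow> real \<Rightarrow> real" where
  "cA k y = (4 * real k + 2) / ((2 * real k + 1)^2 - y)"

definition Ar :: "real \<Rightarrow> real" where
  "Ar y = (\<Sum>k. (-1) ^ k * (4 * real k + 2) / ((2 * real k + 1)\<^sup>2 - y))"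

lemma cdec_gen:
  fixes a b y :: real
  assumes "0 \<le> y" "y < 1" "1 \<le> a" "a < b"
  shows "2*b/(b^2-y) < 2*a/(a^2-y)"
proof -
  have a2: "a^2 - y > 0" using assms by (smt (verit) one_le_power)
  have b2: "b^2 - y > 0" using assms by (smt (verit) one_le_power power_strict_mono)
  have "a*b > 0" using assms by simp
  hence "a*b+y > 0" using assms by linarith
  moreover have "b - a > 0" using assms by simp
  ultimately have "(b-a)*(a*b+y) > 0" by (rule mult_pos_pos[rotated])
  hence "2*b*(a^2-y) < 2*a*(b^2-y)" by (simp add: algebra_simps power2_eq_square)
  thus ?thesis using a2 b2 by (simp add: divide_simps mult.commute)
qed

lemma ddec_gen:
  fixes a b y1 y2 :: real
  assumes "0 \<le> y1" "y1 < y2" "y2 < 1" "1 \<le> a" "a < b"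
  shows "2*b/(b^2-y2) - 2*b/(b^2-y1) < 2*a/(a^2-y2) - 2*a/(a^2-y1)"
proof -
  have a1: "a^2 - y1 > 0" "a^2 - y2 > 0" using assms by (smt (verit) one_le_power)+
  have b1: "b^2 - y1 > 0" "b^2 - y2 > 0" using assms by (smt (verit) one_le_power power_strict_mono)+
  have e: "2*c/(c^2-y2) - 2*c/(c^2-y1) = 2*(y2-y1) / ((c^2-y1)*(c^2-y2)/c)"
    if "c^2-y1 > 0" "c^2-y2>0" "c > 0" for c
    using that by (simp add: field_simps)
  have f1: "(a^2-y1)/a < (b^2-y1)/b"
  proof -
    have "(a^2-y1)/a = a - y1/a" "(b^2-y1)/b = b - y1/b" using assms
      by (simp_all add: field_simps power2_eq_square)
    moreover have "y1/b \<le> y1/a" using assms by (intro divide_left_mono) auto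
    ultimately show ?thesis using assms by linarith
  qed
  have f2: "a^2-y2 < b^2-y2" using assms by (simp add: power_strict_mono)
  have "(a^2-y1)*(a^2-y2)/a < (b^2-y1)*(b^2-y2)/b"
  proof -
    have "(a^2-y1)/a * (a^2-y2) < (b^2-y1)/b * (b^2-y2)"
      using f1 f2 a1 b1 assms by (intro mult_strict_mono) auto
    thus ?thesis by (simp add: field_simps)
  qed
  moreover have pa: "(a^2-y1)*(a^2-y2)/a > 0" using a1 assms by simp
  moreover have pb: "(b^2-y1)*(b^2-y2)/b > 0" using b1 assms by simp
  ultimately have "2*(y2-y1) / ((b^2-y1)*(b^2-y2)/b) < 2*(y2-y1) / ((a^2-y1)*(a^2-y2)/a)"
    by (intro divide_strict_left_mono mult_pos_pos) (use assms in auto)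
  moreover have ea: "2*a/(a^2-y2) - 2*a/(a^2-y1) = 2*(y2-y1)/((a^2-y1)*(a^2-y2)/a)"
    by (rule e) (use a1 assms in auto)
  moreover have eb: "2*b/(b^2-y2) - 2*b/(b^2-y1) = 2*(y2-y1)/((b^2-y1)*(b^2-y2)/b)"
    by (rule e) (use b1 assms in auto)
  ultimately show ?thesis by linarith
qed

lemma cA_alt: "cA k y = 2*(2*real k+1)/((2*real k+1)^2 - y)"
  unfolding cA_def by (simp add: algebra_simps)

lemma cA_pos: assumes "0 \<le> y" "y < 1" shows "cA k y > 0"
proof -
  have "(2*real k+1)^2 \<ge> 1" by simp
  hence "(2*real k+1)^2 - y > 0" using assms by linarith
  thus ?thesis unfolding cA_def by simp
qed

lemma cA_dec: "0 \<le> y \<Longrightarrow> y < 1 \<Longrightarrow> k < m \<Longrightarrow> cA m y < cA k y"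
  unfolding cA_alt by (rule cdec_gen) auto

lemma cA_lim: assumes "0 \<le> y" "y < 1" shows "(\<lambda>k. cA k y) \<longlonglongrightarrow> 0"
proof (rule tendsto_sandwich[where f="\<lambda>_. 0" and h="\<lambda>k. (4*real k+2)/((2*real k+1)^2 - 1)"])
  show "\<forall>\<^sub>F n in sequentially. 0 \<le> cA n y" by (rule always_eventually) (use cA_pos[OF assms] in \<open>simp add: less_imp_le\<close>)
  show "\<forall>\<^sub>F n in sequentially. cA n y \<le> (4*real n+2)/((2*real n+1)^2 - 1)"
  proof (rule eventually_sequentiallyI[of 1])
    fix n :: nat assume "1 \<le> n"
    hence "(2*real n+1)^2 > 1^2" by (intro power_strict_mono) auto
    hence "(2*real n+1)^2 - 1 > 0" by simp
    moreover have "(2*real n+1)^2 - 1 \<le> (2*real n+1)^2 - y" using assms by simp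
    ultimately show "cA n y \<le> (4*real n+2)/((2*real n+1)^2 - 1)"
      unfolding cA_def by (intro divide_left_mono) auto
  qed
  show "(\<lambda>k. (4*real k+2)/((2*real k+1)^2 - 1)) \<longlonglongrightarrow> 0" by real_asymp
qed simp

lemma Ar_alt: "Ar y = (\<Sum>k. (-1)^k * cA k y)"
  unfolding Ar_def cA_def by simp

lemma cA_summable: assumes "0 \<le> y" "y < 1" shows "summable (\<lambda>k. (-1)^k * cA k y)"
proof (rule summable_Leibniz(1))
  show "(\<lambda>k. cA k y) \<longlonglongrightarrow> 0" using cA_lim[OF assms] .
  have "decseq (\<lambda>k. cA k y)" by (rule decseq_SucI) (use cA_dec[OF assms] less_imp_le in auto)
  thus "monoseq (\<lambda>k. cA k y)" by (simp add: monoseq_iff)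
qed

definition qA :: "nat \<Rightarrow> real \<Rightarrow> real" where
  "qA k y = cA (2*k) y - cA (2*k+1) y"

lemma qA_sums: assumes "0 \<le> y" "y < 1" shows "(\<lambda>k. qA k y) sums Ar y"
proof -
  have "(\<lambda>k. (-1)^k * cA k y) sums Ar y" using cA_summable[OF assms] Ar_alt
    by (simp add: summable_sums)
  from sums_group[OF this, of 2] show ?thesis
    by (simp add: qA_def mult.commute)
qed

lemma qA_pos: "0 \<le> y \<Longrightarrow> y < 1 \<Longrightarrow> qA k y > 0"
  unfolding qA_def using cA_dec[of y "2*k" "2*k+1"] by simp

lemma qA_mono: assumes "0 \<le> y1" "y1 < y2" "y2 < 1" shows "qA k y1 < qA k y2"
proof -
  define a where "a = 2*real (2*k)+1"
  define b where "b = 2*real (2*k+1)+1"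
  have ab: "1 \<le> a" "a < b" unfolding a_def b_def by auto
  have "2*b/(b^2-y2) - 2*b/(b^2-y1) < 2*a/(a^2-y2) - 2*a/(a^2-y1)"
    by (rule ddec_gen[OF assms ab])
  moreover have c: "cA (2*k) y = 2*a/(a^2-y)" "cA (2*k+1) y = 2*b/(b^2-y)" for y
    unfolding a_def b_def by (rule cA_alt)+
  ultimately show ?thesis unfolding qA_def c by linarith
qed

lemma Ar_strict_mono: assumes "0 \<le> y1" "y1 < y2" "y2 < 1" shows "Ar y1 < Ar y2"
proof -
  have s1: "(\<lambda>k. qA k y1) sums Ar y1" "(\<lambda>k. qA k y2) sums Ar y2"
    using qA_sums assms by auto
  have s: "(\<lambda>k. qA k y2 - qA k y1) sums (Ar y2 - Ar y1)" using sums_diff[OF s1(2) s1(1)] .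
  have p: "\<And>k. qA k y2 - qA k y1 > 0" using qA_mono[OF assms] by simp
  have "0 < suminf (\<lambda>k. qA k y2 - qA k y1)"
    by (rule suminf_pos[OF sums_summable[OF s] p])
  also have "suminf (\<lambda>k. qA k y2 - qA k y1) = Ar y2 - Ar y1" using s by (rule sums_unique[symmetric])
  finally show ?thesis by simp
qed

lemma Ar_mono: assumes "0 \<le> y1" "y1 \<le> y2" "y2 < 1" shows "Ar y1 \<le> Ar y2"
proof (cases "y1 = y2")
  case False thus ?thesis using Ar_strict_mono[of y1 y2] assms by simp
qed simp

lemma Ar_zero: "Ar 0 = pi/2"
proof -
  have eq: "arctan 1 = (\<Sum>k. (-1)^k * (1 / real (k * 2 + 1) * 1 ^ (k * 2 + 1)))"
    by (rule arctan_series) simp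
  have sm: "summable (\<lambda>k. (-1)^k * (1 / real (k * 2 + 1) * 1 ^ (k * 2 + 1)))"
    by (rule summable_arctan_series) simp
  have "(\<lambda>k. (-1)^k * (1 / real (k * 2 + 1) * 1 ^ (k * 2 + 1))) sums (pi/4)"
    using summable_sums[OF sm] unfolding eq[symmetric] arctan_one .
  hence "(\<lambda>k. (-1)^k * (1 / real (k * 2 + 1))) sums (pi/4)" by simp
  hence "(\<lambda>k. 2 * ((-1)^k * (1 / real (k * 2 + 1)))) sums (2*(pi/4))" by (rule sums_mult)
  moreover have "(\<lambda>k. 2 * ((-1)^k * (1 / real (k * 2 + 1)))) = (\<lambda>k. (-1) ^ k * (4 * real k + 2) / ((2 * real k + 1)\<^sup>2 - 0))"
  proof
    fix k
    define c where "c = 2 * real k + 1"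
    have pos: "c > 0" unfolding c_def by simp
    have e1: "4 * real k + 2 = 2 * c" "(2 * real k + 1)\<^sup>2 - 0 = c * c"
      unfolding c_def by (simp_all add: power2_eq_square)
    have h: "(4 * real k + 2) / ((2 * real k + 1)\<^sup>2 - 0) = 2 / (2 * real k + 1)"
      unfolding e1 using pos by (simp add: c_def[symmetric])
    have "(-1) ^ k * (4 * real k + 2) / ((2 * real k + 1)\<^sup>2 - 0) = (-1)^k * ((4 * real k + 2) / ((2 * real k + 1)\<^sup>2 - 0))"
      by (rule times_divide_eq_right[symmetric])
    also have "\<dots> = (-1)^k * (2 / (2 * real k + 1))" by (simp only: h)
    also have "\<dots> = 2 * ((-1)^k * (1 / real (k * 2 + 1)))" by (simp add: algebra_simps)
    finally show "2 * ((-1)^k * (1 / real (k * 2 + 1))) = (-1) ^ k * (4 * real k + 2) / ((2 * real k + 1)\<^sup>2 - 0)"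
      by simp
  qed
  ultimately have "(\<lambda>k. (-1) ^ k * (4 * real k + 2) / ((2 * real k + 1)\<^sup>2 - 0)) sums (pi/2)" by simp
  thus ?thesis unfolding Ar_def by (rule sums_unique[symmetric])
qed

lemma cA_cont: "d < 1 \<Longrightarrow> continuous_on {0..d} (cA k)"
  unfolding cA_def
proof (intro continuous_intros ballI)
  fix y assume "d < 1" "y \<in> {0..d}"
  hence "y \<le> d" by simp
  moreover have "(2*real k+1)^2 \<ge> 1" by simp
  ultimately have "(2*real k+1)^2 - y > 0" using \<open>d < 1\<close> by linarith
  thus "(2*real k+1)^2 - y \<noteq> 0" by simp
qed

lemma Ar_cont: assumes "d < 1" shows "continuous_on {0..d} Ar"
proof (cases "0 \<le> d")
  case False thus ?thesis by simp
next
  case d0: True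
  have ul: "uniform_limit {0..d} (\<lambda>n x. \<Sum>i<n. qA i x) (\<lambda>x. suminf (\<lambda>i. qA i x)) sequentially"
  proof (rule Weierstrass_m_test)
    show "summable (\<lambda>n. qA n d)" using qA_sums[OF d0 assms] sums_summable by blast
    fix n x assume x: "x \<in> {0..d}"
    have "qA n x \<le> qA n d" using qA_mono[of x d n] x assms by (cases "x = d") auto
    thus "norm (qA n x) \<le> qA n d" using qA_pos[of x n] x assms by auto
  qed
  have "continuous_on {0..d} (\<lambda>x. suminf (\<lambda>i. qA i x))"
  proof (rule uniform_limit_theorem[OF _ ul])
    show "\<forall>\<^sub>F n in sequentially. continuous_on {0..d} (\<lambda>x. \<Sum>i<n. qA i x)"
    proof (intro always_eventually allI)
      fix n show "continuous_on {0..d} (\<lambda>x. \<Sum>i<n. qA i x)"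
        unfolding qA_def
        by (rule continuous_on_sum, rule continuous_on_diff) (use cA_cont[OF assms] in auto)
    qed
  qed simp
  moreover have "suminf (\<lambda>i. qA i x) = Ar x" if "x \<in> {0..d}" for x
    using qA_sums[of x] that assms by (simp add: sums_iff)
  ultimately show ?thesis by (rule continuous_on_eq)
qed

lemma Ar_lower: assumes "0 \<le> y" "y < 1" shows "Ar y \<ge> 2/(1-y) - 1"
proof -
  have "qA 0 y \<le> Ar y"
    using sum_le_suminf[of "\<lambda>i. qA i y" "{0}"] qA_sums[OF assms] qA_pos[OF assms]
    by (simp add: sums_iff less_imp_le)
  moreover have "qA 0 y = 2/(1-y) - 6/(9-y)" unfolding qA_def cA_def by simp
  moreover have "6/(9-y) \<le> 1" using assms by simp
  ultimately show ?thesis by linarith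
qed

lemma Ar_surj: assumes "w \<ge> pi/2" shows "\<exists>y. 0 \<le> y \<and> y < 1 \<and> Ar y = w"
proof -
  define d where "d = 1 - 2/(w+2)"
  have w0: "w > 0" using assms pi_gt_zero by linarith
  have d: "0 \<le> d" "d < 1" unfolding d_def using w0 by (auto simp: field_simps)
  have "2/(1-d) - 1 = w + 1" unfolding d_def using w0 by simp
  hence "w \<le> Ar d" using Ar_lower[OF d] by linarith
  moreover have "Ar 0 \<le> w" using assms Ar_zero by simp
  ultimately obtain y where "0 \<le> y" "y \<le> d" "Ar y = w"
    using IVT'[of Ar 0 w d] Ar_cont[OF d(2)] d by auto
  thus ?thesis using d by auto
qed

lemma A_fun_lt: "y < 1 \<Longrightarrow> A_fun y = ereal (Ar y)"
  unfolding A_fun_def Ar_def by simp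

lemma A_fun_1: "A_fun 1 = \<infinity>"
  unfolding A_fun_def by simp

lemma A_fun_strict: "strict_mono_on {0..1} A_fun"
proof (rule strict_mono_onI)
  fix r s :: real assume "r \<in> {0..1}" "s \<in> {0..1}" "r < s"
  hence r: "0 \<le> r" "r < 1" "r < s" "s \<le> 1" by auto
  show "A_fun r < A_fun s"
  proof (cases "s < 1")
    case True thus ?thesis using r Ar_strict_mono[of r s] by (simp add: A_fun_lt)
  next
    case False hence "s = 1" using r by simp
    thus ?thesis using r by (simp add: A_fun_lt A_fun_1)
  qed
qed

lemma A_fun_inj: "inj_on A_fun {0..1}"
  using A_fun_strict strict_mono_on_imp_inj_on by blast

lemma A_fun_onto: assumes "W \<ge> ereal (pi/2)" shows "W \<in> A_fun ` {0..1}"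
proof (cases W)
  case (real w)
  then obtain y where "0 \<le> y" "y < 1" "Ar y = w" using Ar_surj assms by auto
  thus ?thesis using real A_fun_lt by force
next
  case PInf
  have "(1::real) \<in> {0..1}" by simp
  thus ?thesis using A_fun_1 PInf by (metis image_eqI)
next
  case MInf thus ?thesis using assms by simp
qed

lemma A_inv_props: assumes "W \<ge> ereal (pi/2)"
  shows "A_inv W \<in> {0..1}" "A_fun (A_inv W) = W"
  unfolding A_inv_def
  using the_inv_into_into[OF A_fun_inj A_fun_onto[OF assms] subset_refl] f_the_inv_into_f[OF A_fun_inj A_fun_onto[OF assms]]
  by auto

lemma seq_A:
  fixes y :: "nat \<Rightarrow> real" and W :: ereal
  assumes ev: "eventually (\<lambda>j. 0 \<le> y j \<and> y j < 1) sequentially" and W: "W \<ge> ereal (pi/2)"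
  shows "((\<lambda>j. ereal (Ar (y j))) \<longlonglongrightarrow> W) \<longleftrightarrow> (y \<longlonglongrightarrow> A_inv W)"
proof -
  define c where "c = A_inv W"
  have c: "0 \<le> c" "c \<le> 1" "A_fun c = W" using A_inv_props[OF W] c_def by auto
  show ?thesis
  proof
    assume lim: "(\<lambda>j. ereal (Ar (y j))) \<longlonglongrightarrow> W"
    show "y \<longlonglongrightarrow> A_inv W" unfolding c_def[symmetric]
    proof (rule order_tendstoI)
      fix a assume "a < c"
      show "eventually (\<lambda>j. a < y j) sequentially"
      proof (cases "a < 0")
        case True thus ?thesis using ev by (auto elim: eventually_mono)
      next
        case False
        hence a: "0 \<le> a" "a < 1" using \<open>a < c\<close> c by auto
        have "ereal (Ar a) < W"
        proof (cases "c < 1")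
          case True thus ?thesis using c a \<open>a < c\<close> Ar_strict_mono[of a c] A_fun_lt[of c] by auto
        next
          case False hence "c = 1" using c by simp
          thus ?thesis using c A_fun_1 by simp
        qed
        from order_tendstoD(1)[OF lim this] ev show ?thesis
        proof eventually_elim
          case (elim j)
          show "a < y j"
          proof (rule ccontr)
            assume "\<not> a < y j"
            hence "Ar (y j) \<le> Ar a" using Ar_mono[of "y j" a] a elim by auto
            thus False using elim by simp
          qed
        qed
      qed
    next
      fix a assume "c < a"
      show "eventually (\<lambda>j. y j < a) sequentially"
      proof (cases "a < 1")
        case False thus ?thesis using ev by (auto elim: eventually_mono)
      next
        case True
        have "W < ereal (Ar a)" using c \<open>c < a\<close> True Ar_strict_mono[of c a] A_fun_lt[of c] by auto
        from order_tendstoD(2)[OF lim this] ev show ?thesis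
        proof eventually_elim
          case (elim j)
          show "y j < a"
          proof (rule ccontr)
            assume "\<not> y j < a"
            hence "Ar a \<le> Ar (y j)" using Ar_mono[of a "y j"] c \<open>c < a\<close> elim by auto
            thus False using elim by simp
          qed
        qed
      qed
    qed
  next
    assume "y \<longlonglongrightarrow> A_inv W"
    hence lim: "y \<longlonglongrightarrow> c" by (simp add: c_def)
    show "(\<lambda>j. ereal (Ar (y j))) \<longlonglongrightarrow> W"
    proof (cases "c < 1")
      case True
      define d where "d = (c+1)/2"
      have d: "c < d" "d < 1" using True by (auto simp: d_def)
      have "eventually (\<lambda>j. y j < d) sequentially" using order_tendstoD(2)[OF lim d(1)] .
      hence ev2: "eventually (\<lambda>j. y j \<in> {0..d}) sequentially" using ev by eventually_elim auto
      have "(\<lambda>j. Ar (y j)) \<longlonglongrightarrow> Ar c"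
        by (rule continuous_on_tendsto_compose[OF Ar_cont[OF d(2)] lim _ ev2]) (use c d in auto)
      hence l2: "(\<lambda>j. ereal (Ar (y j))) \<longlonglongrightarrow> ereal (Ar c)" by simp
      have "W = ereal (Ar c)" using c True A_fun_lt[of c] by simp
      thus ?thesis using l2 by (simp only:)
    next
      case False hence "c = 1" using c by simp
      hence W: "W = \<infinity>" using c A_fun_1 by simp
      show ?thesis unfolding W tendsto_PInfty
      proof
        fix r :: real
        define R where "R = \<bar>r\<bar> + 3"
        have R: "R > 0" unfolding R_def by simp
        define d where "d = 1 - 2/R"
        have "d < 1" unfolding d_def using R by simp
        hence "eventually (\<lambda>j. d < y j) sequentially" using order_tendstoD(1)[OF lim] \<open>c = 1\<close> by simp
        thus "eventually (\<lambda>j. ereal r < ereal (Ar (y j))) sequentially" using ev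
        proof eventually_elim
          case (elim j)
          hence y: "0 \<le> y j" "y j < 1" "d < y j" by auto
          have "1 - y j < 2/R" using y(3) unfolding d_def by simp
          hence "(1 - y j) * R < 2" using R by (simp add: pos_less_divide_eq)
          hence "R < 2/(1 - y j)" using y by (simp add: pos_less_divide_eq mult.commute)
          hence "Ar (y j) > \<bar>r\<bar> + 2" using Ar_lower[OF y(1,2)] unfolding R_def by linarith
          thus ?case by simp
        qed
      qed
    qed
  qed
qed

lemma alt_tail:
  fixes b :: "nat \<Rightarrow> real"
  assumes dec: "decseq b" and lim: "b \<longlonglongrightarrow> 0"
  shows "summable (\<lambda>m. (-1)^m * b m)"
    and "\<bar>suminf (\<lambda>m. (-1)^m * b m) - (\<Sum>m<N. (-1)^m * b m)\<bar> \<le> b N"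
proof -
  have nn: "\<And>m. 0 \<le> b m" using decseq_ge[OF dec lim] .
  show sm: "summable (\<lambda>m. (-1)^m * b m)"
    by (rule summable_Leibniz(1)[OF lim decseq_imp_monoseq[OF dec]])
  define b' where "b' = (\<lambda>m. b (m + N))"
  have dec': "decseq b'" using dec unfolding b'_def decseq_def by auto
  have lim': "b' \<longlonglongrightarrow> 0" unfolding b'_def by (rule LIMSEQ_ignore_initial_segment[OF lim])
  have S': "0 \<le> suminf (\<lambda>m. (-1)^m * b' m) \<and> suminf (\<lambda>m. (-1)^m * b' m) \<le> b N"
  proof (cases "0 < b' 0")
    case True
    from summable_Leibniz(2)[OF lim' decseq_imp_monoseq[OF dec']] True
    have "suminf (\<lambda>m. (-1)^m * b' m) \<in> {\<Sum>i<2*0. (- 1)^i * b' i .. \<Sum>i<2*0+1. (- 1)^i * b' i}"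
      by blast
    thus ?thesis by (simp add: b'_def)
  next
    case False
    hence "b' 0 = 0" using nn unfolding b'_def by (metis add_0 le_less)
    hence "\<And>m. b' m = 0" using dec' nn unfolding decseq_def b'_def by (metis le0 order_antisym)
    thus ?thesis using nn by (simp add: b'_def)
  qed
  have "(\<Sum>m. (-1)^(m+N) * b (m + N)) = suminf (\<lambda>m. (-1)^m * b m) - (\<Sum>m<N. (-1)^m * b m)"
    by (rule suminf_minus_initial_segment[OF sm])
  moreover have "(\<Sum>m. (-1)^(m+N) * b (m + N)) = (-1)^N * suminf (\<lambda>m. (-1)^m * b' m)"
  proof -
    have "(\<lambda>m. (-1)^(m+N) * b (m + N)) = (\<lambda>m. (-1)^N * ((-1)^m * b' m))"
      by (simp add: b'_def power_add mult_ac)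
    moreover have "summable (\<lambda>m. (-1)^m * b' m)"
      by (rule summable_Leibniz(1)[OF lim' decseq_imp_monoseq[OF dec']])
    ultimately show ?thesis by (simp add: suminf_mult)
  qed
  ultimately have e: "suminf (\<lambda>m. (-1)^m * b m) - (\<Sum>m<N. (-1)^m * b m) = (-1)^N * suminf (\<lambda>m. (-1)^m * b' m)"
    by simp
  have "\<bar>(-1::real)^N\<bar> = 1" by simp
  hence "\<bar>suminf (\<lambda>m. (-1)^m * b m) - (\<Sum>m<N. (-1)^m * b m)\<bar> = suminf (\<lambda>m. (-1)^m * b' m)"
    unfolding e abs_mult using S' by simp
  thus "\<bar>suminf (\<lambda>m. (-1)^m * b m) - (\<Sum>m<N. (-1)^m * b m)\<bar> \<le> b N" using S' by simp
qed

definition Pf :: "real \<Rightarrow> real" where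
  "Pf u = (\<Sum>m. (-1)^m * (1 / (u + real m)))"

lemma Pf_basic: assumes "u > 0"
  shows "(\<lambda>m. (-1)^m * (1 / (u + real m))) sums Pf u"
    and "\<bar>Pf u - (\<Sum>m<N. (-1)^m * (1 / (u + real m)))\<bar> \<le> 1 / (u + real N)"
proof -
  have dec: "decseq (\<lambda>m. 1 / (u + real m))"
    by (rule decseq_SucI) (use assms in \<open>auto intro!: divide_left_mono simp: add_pos_nonneg\<close>)
  have lim: "(\<lambda>m. 1 / (u + real m)) \<longlonglongrightarrow> 0" by real_asymp
  show "(\<lambda>m. (-1)^m * (1 / (u + real m))) sums Pf u"
    unfolding Pf_def using alt_tail(1)[OF dec lim] by (simp add: summable_sums)
  show "\<bar>Pf u - (\<Sum>m<N. (-1)^m * (1 / (u + real m)))\<bar> \<le> 1 / (u + real N)"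
    unfolding Pf_def using alt_tail(2)[OF dec lim] .
qed

lemma Pf_pair: assumes "0 < f" "f < 1" shows "Pf f + Pf (1 - f) = 2 * Ar ((2*f-1)^2)"
proof -
  have s: "(\<lambda>m. (-1)^m * (1 / (f + real m)) + (-1)^m * (1 / ((1-f) + real m))) sums (Pf f + Pf (1-f))"
    using sums_add[OF Pf_basic(1)[of f] Pf_basic(1)[of "1-f"]] assms by simp
  have eq: "(-1)^m * (1 / (f + real m)) + (-1)^m * (1 / ((1-f) + real m))
     = 2 * ((-1) ^ m * (4 * real m + 2) / ((2 * real m + 1)\<^sup>2 - (2*f-1)^2))" for m
  proof -
    have p1: "f + real m > 0" "1 - f + real m > 0" using assms by auto
    define P where "P = (f + real m) * (1 - f + real m)"
    have P: "P > 0" unfolding P_def using p1 by simp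
    have den: "(2 * real m + 1)\<^sup>2 - (2*f-1)^2 = 4 * P"
      unfolding P_def by (simp add: power2_eq_square algebra_simps)
    have "1 / (f + real m) + 1 / ((1-f) + real m) = (2 * real m + 1) / P"
      unfolding P_def using p1 by (simp add: field_simps)
    also have "\<dots> = 2 * ((4 * real m + 2) / ((2 * real m + 1)\<^sup>2 - (2*f-1)^2))"
      unfolding den using P by (simp add: field_simps)
    finally have h: "1 / (f + real m) + 1 / ((1-f) + real m) = 2 * ((4 * real m + 2) / ((2 * real m + 1)\<^sup>2 - (2*f-1)^2))" .
    have "(-1)^m * (1 / (f + real m)) + (-1)^m * (1 / ((1-f) + real m)) = (-1)^m * (1 / (f + real m) + 1 / ((1-f) + real m))"
      by (simp only: distrib_left)
    also have "\<dots> = (-1)^m * (2 * ((4 * real m + 2) / ((2 * real m + 1)\<^sup>2 - (2*f-1)^2)))" by (simp only: h)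
    also have "\<dots> = 2 * ((-1) ^ m * (4 * real m + 2) / ((2 * real m + 1)\<^sup>2 - (2*f-1)^2))" by simp
    finally show ?thesis .
  qed
  have "(\<lambda>m. 2 * ((-1) ^ m * (4 * real m + 2) / ((2 * real m + 1)\<^sup>2 - (2*f-1)^2))) sums (Pf f + Pf (1-f))"
    using s unfolding eq .
  hence "(\<lambda>m. 2 * ((-1) ^ m * (4 * real m + 2) / ((2 * real m + 1)\<^sup>2 - (2*f-1)^2)) / 2) sums ((Pf f + Pf (1-f)) / 2)"
    by (rule sums_divide)
  moreover have c2: "\<And>X::real. 2 * X / 2 = X" by simp
  ultimately have "(\<lambda>m. (-1) ^ m * (4 * real m + 2) / ((2 * real m + 1)\<^sup>2 - (2*f-1)^2)) sums ((Pf f + Pf (1-f)) / 2)"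
    by (simp only: c2)
  hence "Ar ((2*f-1)^2) = (Pf f + Pf (1-f)) / 2" unfolding Ar_def by (rule sums_unique[symmetric])
  thus ?thesis by simp
qed

lemma neg1_pow_diff: "m \<le> i \<Longrightarrow> (-1::real)^(i-m) = (-1)^i * (-1)^m"
proof -
  assume "m \<le> i"
  hence "(-1::real)^i = (-1)^(i-m) * (-1)^m" by (simp add: power_add[symmetric])
  moreover have "(-1::real)^m * (-1)^m = 1" by (simp add: power_mult_distrib[symmetric])
  ultimately show ?thesis by (metis mult.assoc mult_1_right)
qed

lemma D_decomp:
  fixes n i :: nat and x t f :: real
  assumes n: "n > 0" and t: "t = real n * (x+1)/2" and i: "i \<le> n" and f: "f = t - real i" "0 < f" "f < 1"
  shows "Dn n x / real n = (-1)^i/2 * ((\<Sum>m<i+1. (-1)^m*(1/(f+real m))) + (\<Sum>m<n-i. (-1)^m*(1/((1-f)+real m))))"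
proof -
  define g where "g = (\<lambda>k::nat. (-1::real)^k / (2*(t - real k)))"
  have hterm: "(-1)^k / (x - node k n) / real n = g k" for k
  proof -
    have "(x - node k n) * real n = 2*(t - real k)" using n unfolding node_def t by (simp add: field_simps)
    thus ?thesis unfolding g_def by (simp add: divide_divide_eq_left)
  qed
  have "Dn n x / real n = (\<Sum>k<n+1. g k)"
  proof -
    have "{0..n} = {..<n+1}" by auto
    thus ?thesis unfolding Dn_def sum_divide_distrib using hterm by simp
  qed
  also have "\<dots> = (\<Sum>k<i+1. g k) + (\<Sum>k\<in>{i+1..<n+1}. g k)"
    using sum.atLeastLessThan_concat[of 0 "i+1" "n+1" g] i by (simp add: atLeast0LessThan)
  also have "(\<Sum>k<i+1. g k) = (\<Sum>m<i+1. g (i + 1 - Suc m))"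
    by (rule sum.nat_diff_reindex[symmetric])
  also have "\<dots> = (\<Sum>m<i+1. (-1)^i/2 * ((-1)^m*(1/(f+real m))))"
  proof (rule sum.cong[OF refl])
    fix m assume "m \<in> {..<i+1}"
    hence m: "m \<le> i" by simp
    have "t - real (i - m) = f + real m" using m f by (simp add: of_nat_diff)
    thus "g (i + 1 - Suc m) = (-1)^i/2 * ((-1)^m*(1/(f+real m)))"
      unfolding g_def using neg1_pow_diff[OF m] by simp
  qed
  also have "(\<Sum>k\<in>{i+1..<n+1}. g k) = (\<Sum>m\<in>{0..<n-i}. g (m + (i+1)))"
    using sum.shift_bounds_nat_ivl[of g 0 "i+1" "n-i"] i by simp
  also have "\<dots> = (\<Sum>m<n-i. (-1)^i/2 * ((-1)^m*(1/((1-f)+real m))))"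
    unfolding atLeast0LessThan
  proof (rule sum.cong[OF refl])
    fix m assume "m \<in> {..<n-i}"
    have e1: "2*(t - real (m + (i+1))) = - (2*((1-f) + real m))" using f by simp
    have e2: "(-1::real)^(m + (i+1)) = - ((-1)^i * (-1)^m)" by (simp add: power_add)
    have Q: "(1-f) + real m > 0" using f by simp
    show "g (m + (i+1)) = (-1)^i/2 * ((-1)^m*(1/((1-f)+real m)))"
      unfolding g_def e1 e2 using Q by (simp add: field_simps)
  qed
  finally show ?thesis by (simp only: sum_distrib_left distrib_left)
qed

lemma D_est:
  fixes n :: nat and x :: real
  assumes n: "n > 0" and x: "-1 < x" "x < 1" and reg: "\<forall>k\<le>n. x \<noteq> node k n"
  shows "0 \<le> (rho n x)^2 \<and> (rho n x)^2 < 1"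
    and "\<bar>Dn n x / real n - (-1)^(iota n x) * Ar ((rho n x)^2)\<bar> \<le> 1/(real n*(x+1)) + 1/(real n*(1-x))"
proof -
  define t where "t = real n * (x+1)/2"
  define i where "i = iota n x"
  define f where "f = t - real i"
  have t0: "0 \<le> t" unfolding t_def using x by simp
  have tn: "t < real n" unfolding t_def using x n by (simp add: field_simps)
  have fl: "real i = of_int \<lfloor>t\<rfloor>" unfolding i_def iota_def t_def using t0 t_def by simp
  have f0: "0 \<le> f" "f < 1" unfolding f_def fl by linarith+
  have "real i \<le> t" unfolding fl by linarith
  hence iN: "i \<le> n" using tn by linarith
  have fne: "f \<noteq> 0"
  proof
    assume "f = 0"
    hence "t = real i" unfolding f_def by simp
    hence "node i n = x" unfolding node_def t_def using n by (simp add: field_simps)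
    thus False using reg iN by auto
  qed
  hence fpos: "0 < f" using f0 by simp
  have rho: "rho n x = 2*f - 1"
    unfolding rho_def i_def[symmetric] f_def t_def node_def using n by (simp add: field_simps)
  show "0 \<le> (rho n x)^2 \<and> (rho n x)^2 < 1"
  proof
    show "0 \<le> (rho n x)^2" by simp
    have "\<bar>rho n x\<bar> < 1" unfolding rho using fpos f0 by simp
    thus "(rho n x)^2 < 1" by (simp add: abs_square_less_1)
  qed
  define SL where "SL = (\<Sum>m<i+1. (-1)^m*(1/(f+real m)))"
  define SR where "SR = (\<Sum>m<n-i. (-1)^m*(1/((1-f)+real m)))"
  have D: "Dn n x / real n = (-1)^i/2 * (SL + SR)"
    unfolding SL_def SR_def by (rule D_decomp[OF n t_def iN f_def fpos f0(2)])
  have A: "(-1)^i * Ar ((rho n x)^2) = (-1)^i/2 * (Pf f + Pf (1-f))"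
    unfolding rho using Pf_pair[OF fpos f0(2)] by simp
  have bL: "\<bar>Pf f - SL\<bar> \<le> 1/(f + real (i+1))" unfolding SL_def by (rule Pf_basic(2)[OF fpos])
  have bR: "\<bar>Pf (1-f) - SR\<bar> \<le> 1/((1-f) + real (n-i))" unfolding SR_def by (rule Pf_basic(2)) (use f0 in simp)
  have "\<bar>Dn n x / real n - (-1)^i * Ar ((rho n x)^2)\<bar> = \<bar>(-1)^i/2 * ((SL - Pf f) + (SR - Pf (1-f)))\<bar>"
    unfolding D A by (simp add: algebra_simps)
  also have "\<dots> = (\<bar>(SL - Pf f) + (SR - Pf (1-f))\<bar>)/2" by (simp add: abs_mult)
  also have "\<dots> \<le> (1/(f + real (i+1)) + 1/((1-f) + real (n-i)))/2"
    using bL bR by (simp add: abs_minus_commute)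
  also have "\<dots> \<le> (2/(real n*(x+1)) + 2/(real n*(1-x)))/2"
  proof -
    have p1: "real n*(x+1) > 0" "real n*(1-x) > 0" using n x by simp_all
    have "f + real (i+1) = t + 1" unfolding f_def by simp
    hence "real n*(x+1)/2 \<le> f + real (i+1)" unfolding t_def by simp
    hence "1/(f + real (i+1)) \<le> 1/(real n*(x+1)/2)" using p1 by (intro divide_left_mono) auto
    hence l1: "1/(f + real (i+1)) \<le> 2/(real n*(x+1))" by simp
    have "(1-f) + real (n-i) = real n - t + 1" unfolding f_def using iN by (simp add: of_nat_diff)
    moreover have "real n*(1-x)/2 = real n - t" unfolding t_def by (simp add: field_simps)
    ultimately have "real n*(1-x)/2 \<le> (1-f) + real (n-i)" by linarith
    hence "1/((1-f) + real (n-i)) \<le> 1/(real n*(1-x)/2)" using p1 by (intro divide_left_mono) auto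
    hence l2: "1/((1-f) + real (n-i)) \<le> 2/(real n*(1-x))" by simp
    show ?thesis using l1 l2 by simp
  qed
  also have "\<dots> = 1/(real n*(x+1)) + 1/(real n*(1-x))" by simp
  finally show "\<bar>Dn n x / real n - (-1)^(iota n x) * Ar ((rho n x)^2)\<bar> \<le> 1/(real n*(x+1)) + 1/(real n*(1-x))"
    unfolding i_def .
qed

lemma ereal_add0:
  fixes u v :: "nat \<Rightarrow> real" and L :: ereal
  assumes "(\<lambda>j. ereal (u j)) \<longlonglongrightarrow> L" "v \<longlonglongrightarrow> 0"
  shows "(\<lambda>j. ereal (u j + v j)) \<longlonglongrightarrow> L"
proof -
  have "(\<lambda>j. ereal (v j)) \<longlonglongrightarrow> ereal 0" using assms(2) by simp
  from tendsto_add_ereal_general[OF _ assms(1) this]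
  show ?thesis by (simp add: zero_ereal_def[symmetric])
qed

lemma neg1_pow_cases: "(-1::real)^k = 1 \<or> (-1::real)^k = -1"
  by (cases "even k") auto

theorem corollary2:
  fixes nj :: "nat \<Rightarrow> nat" and x :: real and L :: ereal
  assumes "strict_mono nj"
    and "x \<in> {-1..1}"
    and "regular_for nj x"
  shows "((\<lambda>j. ereal (Dn (nj j) x / real (nj j))) \<longlonglongrightarrow> L) \<longleftrightarrow>
         (((\<lambda>j. (-1::real) ^ iota (nj j) x) \<longlonglongrightarrow> esign L)
          \<and> \<bar>L\<bar> \<ge> ereal (pi / 2)
          \<and> ((\<lambda>j. (rho (nj j) x)\<^sup>2) \<longlonglongrightarrow> A_inv \<bar>L\<bar>))"
proof -
  obtain j0 where j0: "\<And>j k. j \<ge> j0 \<Longrightarrow> k \<le> nj j \<Longrightarrow> x \<noteq> node k (nj j)"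
    using assms(3) unfolding regular_for_def by blast
  have nge: "\<And>j. j \<le> nj j" using seq_suble[OF assms(1)] .
  define j1 where "j1 = max j0 1"
  have n1: "nj j1 > 0" using nge[of j1] unfolding j1_def by linarith
  have "x \<noteq> node 0 (nj j1)" "x \<noteq> node (nj j1) (nj j1)" using j0[of j1] unfolding j1_def by auto
  hence xm: "-1 < x" "x < 1" using assms(2) n1 unfolding node_def by auto
  have evj: "eventually (\<lambda>j. j \<ge> j1) sequentially" by (rule eventually_ge_at_top)
  have npos: "\<And>j. j \<ge> j1 \<Longrightarrow> nj j > 0" using nge unfolding j1_def
    by (metis le_trans max.bounded_iff not_gr0 not_one_le_zero)
  have regj: "\<And>j. j \<ge> j1 \<Longrightarrow> \<forall>k\<le>nj j. x \<noteq> node k (nj j)" using j0 unfolding j1_def by auto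
  define s where "s = (\<lambda>j. (-1::real) ^ iota (nj j) x)"
  define y where "y = (\<lambda>j. (rho (nj j) x)\<^sup>2)"
  define a where "a = (\<lambda>j. Ar (y j))"
  define D where "D = (\<lambda>j. Dn (nj j) x / real (nj j))"
  define E where "E = (\<lambda>j. D j - s j * a j)"
  define C where "C = 1/(x+1) + 1/(1-x)"
  have s_cases: "\<And>j. s j = 1 \<or> s j = -1" unfolding s_def by (rule neg1_pow_cases)
  have ev_y: "eventually (\<lambda>j. 0 \<le> y j \<and> y j < 1) sequentially"
    using evj by eventually_elim (use D_est(1)[OF npos xm regj] in \<open>auto simp: y_def\<close>)
  have ev_a: "eventually (\<lambda>j. a j \<ge> pi/2) sequentially"
    using ev_y by eventually_elim (use Ar_mono[of 0] Ar_zero in \<open>auto simp: a_def\<close>)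
  have DE: "\<And>j. D j = s j * a j + E j" unfolding E_def by simp
  have E0: "E \<longlonglongrightarrow> 0"
  proof (rule Lim_null_comparison)
    show "eventually (\<lambda>j. norm (E j) \<le> C / real (nj j)) sequentially"
      using evj
    proof eventually_elim
      case (elim j)
      have "norm (E j) \<le> 1/(real (nj j)*(x+1)) + 1/(real (nj j)*(1-x))"
        using D_est(2)[OF npos[OF elim] xm regj[OF elim]]
        by (simp add: E_def D_def s_def a_def y_def)
      also have "\<dots> = C / real (nj j)"
      proof -
        have "x + 1 \<noteq> 0" "1 - x \<noteq> 0" "real (nj j) \<noteq> 0" using xm npos[OF elim] by auto
        thus ?thesis unfolding C_def add_divide_distrib divide_divide_eq_left by (simp only: mult.commute)
      qed
      finally show ?case .
    qed
    have "(\<lambda>n. C / real n) \<longlonglongrightarrow> 0"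
      by (rule tendsto_divide_0[OF tendsto_const filterlim_at_top_imp_at_infinity[OF filterlim_real_sequentially]])
    from LIMSEQ_subseq_LIMSEQ[OF this assms(1)]
    show "(\<lambda>j. C / real (nj j)) \<longlonglongrightarrow> 0" by (simp add: o_def)
  qed
  have ev_apos: "eventually (\<lambda>j. a j > 0) sequentially"
    using ev_a by eventually_elim (use pi_gt_zero in linarith)
  have eqv: "((\<lambda>j. ereal (D j)) \<longlonglongrightarrow> L) \<longleftrightarrow> (s \<longlonglongrightarrow> esign L \<and> \<bar>L\<bar> \<ge> ereal (pi/2) \<and> y \<longlonglongrightarrow> A_inv \<bar>L\<bar>)"
  proof
    assume lim: "(\<lambda>j. ereal (D j)) \<longlonglongrightarrow> L"
    have l1: "(\<lambda>j. ereal (s j * a j)) \<longlonglongrightarrow> L"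
      using ereal_add0[OF lim, of "\<lambda>j. - E j"] E0 tendsto_minus[OF E0] unfolding E_def by simp
    have "(\<lambda>j. \<bar>ereal (s j * a j)\<bar>) \<longlonglongrightarrow> \<bar>L\<bar>" by (rule tendsto_abs_ereal[OF l1])
    moreover have "eventually (\<lambda>j. \<bar>ereal (s j * a j)\<bar> = ereal (a j)) sequentially"
      using ev_apos
    proof eventually_elim
      case (elim j) thus ?case using s_cases[of j] by auto
    qed
    ultimately have l2: "(\<lambda>j. ereal (a j)) \<longlonglongrightarrow> \<bar>L\<bar>" by (rule Lim_transform_eventually)
    have W: "\<bar>L\<bar> \<ge> ereal (pi/2)"
      by (rule tendsto_lowerbound[OF l2]) (use ev_a in auto)
    have ylim: "y \<longlonglongrightarrow> A_inv \<bar>L\<bar>" using seq_A[OF ev_y W] l2 unfolding a_def by simp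
    have Lnz: "L > 0 \<or> L < 0"
    proof (cases L)
      case (real r)
      hence "pi/2 \<le> \<bar>r\<bar>" using W by simp
      moreover have "pi/2 > 0" using pi_gt_zero by simp
      ultimately have "r \<noteq> 0" by (metis abs_zero not_le)
      thus ?thesis using real by auto
    qed auto
    have slim: "s \<longlonglongrightarrow> esign L"
    proof (cases "L > 0")
      case True
      have "eventually (\<lambda>j. 0 < ereal (s j * a j)) sequentially"
        using order_tendstoD(1)[OF l1 True[unfolded zero_ereal_def]] by (simp add: zero_ereal_def)
      hence "eventually (\<lambda>j. s j = 1) sequentially" using ev_apos
      proof eventually_elim
        case (elim j) thus ?case using s_cases[of j] by (auto simp: zero_less_mult_iff)
      qed
      hence "s \<longlonglongrightarrow> 1" by (rule tendsto_eventually)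
      thus ?thesis using True by (simp add: esign_def)
    next
      case False
      hence Lneg: "L < 0" using Lnz by simp
      have "eventually (\<lambda>j. ereal (s j * a j) < 0) sequentially"
        using order_tendstoD(2)[OF l1 Lneg] .
      hence "eventually (\<lambda>j. s j = -1) sequentially" using ev_apos
      proof eventually_elim
        case (elim j) thus ?case using s_cases[of j] by (auto simp: mult_less_0_iff)
      qed
      hence "s \<longlonglongrightarrow> -1" by (rule tendsto_eventually)
      moreover have "esign L = -1" using Lneg unfolding esign_def by auto
      ultimately show ?thesis by simp
    qed
    show "s \<longlonglongrightarrow> esign L \<and> \<bar>L\<bar> \<ge> ereal (pi/2) \<and> y \<longlonglongrightarrow> A_inv \<bar>L\<bar>"
      using slim W ylim by simp
  next
    assume "s \<longlonglongrightarrow> esign L \<and> \<bar>L\<bar> \<ge> ereal (pi/2) \<and> y \<longlonglongrightarrow> A_inv \<bar>L\<bar>"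
    hence slim: "s \<longlonglongrightarrow> esign L" and W: "\<bar>L\<bar> \<ge> ereal (pi/2)" and ylim: "y \<longlonglongrightarrow> A_inv \<bar>L\<bar>"
      by auto
    have l2: "(\<lambda>j. ereal (a j)) \<longlonglongrightarrow> \<bar>L\<bar>" using seq_A[OF ev_y W] ylim unfolding a_def by simp
    have Lnz: "L > 0 \<or> L < 0"
    proof (cases L)
      case (real r)
      hence "pi/2 \<le> \<bar>r\<bar>" using W by simp
      moreover have "pi/2 > 0" using pi_gt_zero by simp
      ultimately have "r \<noteq> 0" by (metis abs_zero not_le)
      thus ?thesis using real by auto
    qed auto
    show "(\<lambda>j. ereal (D j)) \<longlonglongrightarrow> L"
    proof (cases "L > 0")
      case True
      have "s \<longlonglongrightarrow> 1" using slim True by (simp add: esign_def)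
      from order_tendstoD(1)[OF this zero_less_one]
      have evs: "eventually (\<lambda>j. s j = 1) sequentially"
      proof eventually_elim
        case (elim j) thus ?case using s_cases[of j] by auto
      qed
      have "\<bar>L\<bar> = L" using True by (simp add: abs_ereal_pos less_imp_le)
      hence "(\<lambda>j. ereal (a j + E j)) \<longlonglongrightarrow> L" using ereal_add0[OF l2 E0] by simp
      moreover have "eventually (\<lambda>j. ereal (a j + E j) = ereal (D j)) sequentially"
        using evs by eventually_elim (simp add: DE)
      ultimately show ?thesis by (rule Lim_transform_eventually)
    next
      case False
      hence Lneg: "L < 0" using Lnz by simp
      have "esign L = -1" using Lneg unfolding esign_def by auto
      hence "s \<longlonglongrightarrow> -1" using slim by simp
      moreover have "(-1::real) < 0" by simp
      ultimately have "eventually (\<lambda>j. s j < 0) sequentially" by (rule order_tendstoD(2))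
      from this
      have evs: "eventually (\<lambda>j. s j = -1) sequentially"
      proof eventually_elim
        case (elim j) thus ?case using s_cases[of j] by auto
      qed
      have "\<bar>L\<bar> = - L" using Lneg by (cases L) auto
      hence "(\<lambda>j. - ereal (a j)) \<longlonglongrightarrow> L" using tendsto_uminus_ereal[OF l2] by simp
      hence "(\<lambda>j. ereal (- a j)) \<longlonglongrightarrow> L" by simp
      hence "(\<lambda>j. ereal (- a j + E j)) \<longlonglongrightarrow> L" by (rule ereal_add0[OF _ E0])
      moreover have "eventually (\<lambda>j. ereal (- a j + E j) = ereal (D j)) sequentially"
        using evs by eventually_elim (simp add: DE)
      ultimately show ?thesis by (rule Lim_transform_eventually)
    qed
  qed
  thus ?thesis unfolding D_def s_def y_def .
qed

end
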